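(* Let $n\ge 2$ and let $G$ be the graph obtained from the complete graph $K_n$ by adding, for each edge $e$ of $K_n$, a new vertex $v_e$ adjacent exactly to the two endpoints of $e$. Then $G$ is well-bicovered.
   Context: All graphs are finite and simple; "subgraph" means induced subgraph. A graph is well-bicovered if every vertex-inclusion-maximal induced bipartite subgraph has the same order. *)

theory Defs
  imports Main
begin

text \<open>Subgraphs are induced subgraphs, so an
induced subgraph is determined by its vertex set S \<subseteq> V.\<close>

definition simple_graph :: "'a set \<Rightarrow> ('a \<Rightarrow> 'a \<Rightarrow> bool) \<Rightarrow> bool" where
  "simple_graph V E \<longleftrightarrow> finite V \<and> (\<forall>x y. E x y \<longrightarrow> x \<in> V \<and> y \<in> V)
     \<and> (\<forall>x y. E x y \<longrightarrow> E y x) \<and> (\<forall>x. \<not> E x x)"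

definition induced_bipartite :: "('a \<Rightarrow> 'a \<Rightarrow> bool) \<Rightarrow> 'a set \<Rightarrow> bool" where
  "induced_bipartite E S \<longleftrightarrow> (\<exists>A B. A \<union> B = S \<and> A \<inter> B = {}
      \<and> (\<forall>x\<in>A. \<forall>y\<in>A. \<not> E x y) \<and> (\<forall>x\<in>B. \<forall>y\<in>B. \<not> E x y))"

definition maximal_induced_bipartite :: "'a set \<Rightarrow> ('a \<Rightarrow> 'a \<Rightarrow> bool) \<Rightarrow> 'a set \<Rightarrow> bool" where
  "maximal_induced_bipartite V E S \<longleftrightarrow> S \<subseteq> V \<and> induced_bipartite E S
      \<and> (\<forall>T. S \<subset> T \<and> T \<subseteq> V \<longrightarrow> \<not> induced_bipartite E T)"

definition well_bicovered :: "'a set \<Rightarrow> ('a \<Rightarrow> 'a \<Rightarrow> bool) \<Rightarrow> bool" where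
  "well_bicovered V E \<longleftrightarrow> (\<forall>S T. maximal_induced_bipartite V E S
      \<longrightarrow> maximal_induced_bipartite V E T \<longrightarrow> card S = card T)"

text \<open>K_n on vertices Inl 0..Inl (n-1); for each edge e = {i,j} of K_n a new vertex Inr e
adjacent exactly to Inl i and Inl j.\<close>
definition Kn_verts :: "nat \<Rightarrow> (nat + nat set) set" where
  "Kn_verts n = Inl ` {..<n} \<union> Inr ` {e. e \<subseteq> {..<n} \<and> card e = 2}"

fun Kn_adj :: "nat \<Rightarrow> (nat + nat set) \<Rightarrow> (nat + nat set) \<Rightarrow> bool" where
  "Kn_adj n (Inl i) (Inl j) \<longleftrightarrow> i < n \<and> j < n \<and> i \<noteq> j"
| "Kn_adj n (Inl i) (Inr e) \<longleftrightarrow> e \<subseteq> {..<n} \<and> card e = 2 \<and> i \<in> e"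
| "Kn_adj n (Inr e) (Inl i) \<longleftrightarrow> e \<subseteq> {..<n} \<and> card e = 2 \<and> i \<in> e"
| "Kn_adj n (Inr e) (Inr f) \<longleftrightarrow> False"

end

theory Submission
  imports Defs
begin

lemma tri:
  assumes "induced_bipartite E T" "x \<in> T" "y \<in> T" "z \<in> T" "E x y" "E y z" "E x z"
  shows False
  using assms unfolding induced_bipartite_def by blast

lemma card2_eq:
  assumes "card (e::nat set) = 2" "a \<in> e" "b \<in> e" "a \<noteq> b"
  shows "e = {a,b}"
proof -
  have "finite e" using assms(1) by (metis card.infinite zero_neq_numeral)
  moreover have "{a,b} \<subseteq> e" using assms by auto
  moreover have "card {a,b} = card e" using assms by simp
  ultimately show ?thesis by (metis card_subset_eq)
qed

lemma constr:
  assumes L: "\<forall>i. Inl i \<in> T \<longrightarrow> i = a \<or> i = b"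
    and R: "a \<noteq> b \<Longrightarrow> Inl b \<in> T \<Longrightarrow> Inr {a,b} \<notin> T"
  shows "induced_bipartite (Kn_adj n) T"
proof -
  define A where "A = {x\<in>T. x = Inl a \<or> (\<exists>e. x = Inr e \<and> a \<notin> e)}"
  define B where "B = T - A"
  have 1: "\<forall>x\<in>A. \<forall>y\<in>A. \<not> Kn_adj n x y"
  proof (intro ballI)
    fix x y assume "x \<in> A" "y \<in> A"
    then show "\<not> Kn_adj n x y" unfolding A_def by auto
  qed
  have 2: "\<forall>x\<in>B. \<forall>y\<in>B. \<not> Kn_adj n x y"
  proof (intro ballI)
    fix x y assume x: "x \<in> B" and y: "y \<in> B"
    show "\<not> Kn_adj n x y"
    proof (cases x)
      case (Inl i)
      then have i: "i = b" "i \<noteq> a" "Inl b \<in> T" using x L unfolding B_def A_def by auto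
      show ?thesis
      proof (cases y)
        case (Inl j)
        then have "j = b" using y L unfolding B_def A_def by auto
        then show ?thesis using i \<open>x = Inl i\<close> Inl by simp
      next
        case (Inr e)
        then have e: "a \<in> e" "Inr e \<in> T" using y unfolding B_def A_def by auto
        show ?thesis
        proof
          assume "Kn_adj n x y"
          then have "card e = 2" "b \<in> e" using i \<open>x = Inl i\<close> Inr by auto
          then have "e = {a,b}" using card2_eq e i by blast
          then show False using R i e by auto
        qed
      qed
    next
      case (Inr e)
      then have e: "a \<in> e" "Inr e \<in> T" using x unfolding B_def A_def by auto
      show ?thesis
      proof (cases y)
        case (Inl j)
        then have j: "j = b" "j \<noteq> a" "Inl b \<in> T" using y L unfolding B_def A_def by auto
        show ?thesis
        proof
          assume "Kn_adj n x y"
          then have "card e = 2" "b \<in> e" using j \<open>x = Inr e\<close> Inl by auto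
          then have "e = {a,b}" using card2_eq e j by blast
          then show False using R j e by auto
        qed
      next
        case (Inr f)
        then show ?thesis using \<open>x = Inr e\<close> by simp
      qed
    qed
  qed
  show ?thesis unfolding induced_bipartite_def
    by (rule exI[of _ A], rule exI[of _ B]) (use 1 2 in \<open>auto simp: A_def B_def\<close>)
qed


lemma E2_finite: "finite {e. e \<subseteq> {..<n::nat} \<and> card e = 2}"
  by (rule finite_subset[of _ "Pow {..<n}"]) auto

lemma maxcard:
  assumes n: "n \<ge> 2" and M: "maximal_induced_bipartite (Kn_verts n) (Kn_adj n) S"
  shows "card S = card {e. e \<subseteq> {..<n::nat} \<and> card e = 2} + 1"
proof -
  define E2 where "E2 = {e. e \<subseteq> {..<n::nat} \<and> card e = 2}"
  have fE: "finite E2" unfolding E2_def by (rule E2_finite)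
  have sub: "S \<subseteq> Kn_verts n" and bip: "induced_bipartite (Kn_adj n) S"
    using M unfolding maximal_induced_bipartite_def by auto
  have add: "\<not> induced_bipartite (Kn_adj n) (insert x S)" if "x \<in> Kn_verts n" "x \<notin> S" for x
    using M that unfolding maximal_induced_bipartite_def by blast
  have inl: "i < n" if "Inl i \<in> S" for i using sub that unfolding Kn_verts_def by auto
  have inr: "e \<in> E2" if "Inr e \<in> S" for e using sub that unfolding Kn_verts_def E2_def by auto
  have VR: "Inr e \<in> Kn_verts n" if "e \<in> E2" for e using that unfolding Kn_verts_def E2_def by auto
  have injR: "inj Inr" by (auto simp: inj_def)
  show ?thesis
  proof (cases "\<exists>a b. a \<noteq> b \<and> Inl a \<in> S \<and> Inl b \<in> S")
    case True
    then obtain a b where ab: "a \<noteq> b" "Inl a \<in> S" "Inl b \<in> S" by blast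
    have abn: "a < n" "b < n" using ab inl by auto
    have c: "c = a \<or> c = b" if "Inl c \<in> S" for c
    proof (rule ccontr)
      assume "\<not> (c = a \<or> c = b)"
      then show False using tri[OF bip ab(2) ab(3) that] ab abn inl[OF that] by auto
    qed
    have abE: "{a,b} \<in> E2" using ab abn unfolding E2_def by auto
    have nab: "Inr {a,b} \<notin> S"
    proof
      assume h: "Inr {a,b} \<in> S"
      show False using tri[OF bip ab(2) ab(3) h] ab abn abE unfolding E2_def by auto
    qed
    have oth: "Inr e \<in> S" if "e \<in> E2" "e \<noteq> {a,b}" for e
    proof (rule ccontr)
      assume h: "Inr e \<notin> S"
      have "induced_bipartite (Kn_adj n) (insert (Inr e) S)"
        by (rule constr[of _ a b]) (use c nab that in auto)
      then show False using add[OF VR[OF that(1)] h] by blast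
    qed
    have "S = {Inl a, Inl b} \<union> Inr ` (E2 - {{a,b}})"
    proof (intro equalityI subsetI)
      fix x assume "x \<in> S"
      then show "x \<in> {Inl a, Inl b} \<union> Inr ` (E2 - {{a,b}})"
        using c inr nab by (cases x) auto
    next
      fix x assume "x \<in> {Inl a, Inl b} \<union> Inr ` (E2 - {{a,b}})"
      then show "x \<in> S" using ab oth by auto
    qed
    moreover have "card ({Inl a, Inl b} \<union> Inr ` (E2 - {{a,b}})) = 2 + (card E2 - 1)"
    proof -
      have "card ({Inl a, Inl b} \<union> Inr ` (E2 - {{a,b}})) = card {Inl a, Inl b :: nat + nat set} + card (Inr ` (E2 - {{a,b}}) :: (nat + nat set) set)"
      proof (rule card_Un_disjoint)
        show "finite (Inr ` (E2 - {{a,b}}) :: (nat + nat set) set)" using fE by simp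
        show "{Inl a, Inl b} \<inter> Inr ` (E2 - {{a,b}}) = {}" by blast
      qed simp
      also have "card (Inr ` (E2 - {{a,b}}) :: (nat + nat set) set) = card (E2 - {{a,b}})"
        by (rule card_image) (use injR in \<open>auto simp: inj_on_def\<close>)
      also have "card (E2 - {{a,b}}) = card E2 - 1" using abE fE by simp
      finally show ?thesis using ab by simp
    qed
    moreover have "card E2 \<ge> 1" using abE fE by (metis One_nat_def card_0_eq empty_iff less_one not_le)
    ultimately show ?thesis unfolding E2_def by simp
  next
    case False
    show ?thesis
    proof (cases "\<exists>a. Inl a \<in> S")
      case True
      then obtain a where a: "Inl a \<in> S" by blast
      have c: "c = a" if "Inl c \<in> S" for c using False a that by blast
      have oth: "Inr e \<in> S" if "e \<in> E2" for e
      proof (rule ccontr)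
        assume h: "Inr e \<notin> S"
        have "induced_bipartite (Kn_adj n) (insert (Inr e) S)"
        proof (rule constr[of _ a a])
          show "\<forall>i. Inl i \<in> insert (Inr e) S \<longrightarrow> i = a \<or> i = a" using c by blast
        qed simp
        then show False using add[OF VR[OF that(1)] h] by blast
      qed
      have "S = insert (Inl a) (Inr ` E2)"
      proof (intro equalityI subsetI)
        fix x assume "x \<in> S"
        then show "x \<in> insert (Inl a) (Inr ` E2)" using c inr by (cases x) auto
      next
        fix x assume "x \<in> insert (Inl a) (Inr ` E2)"
        then show "x \<in> S" using a oth by auto
      qed
      moreover have "card (insert (Inl a) (Inr ` E2)) = card E2 + 1"
      proof -
        have "card (Inr ` E2 :: (nat + nat set) set) = card E2"
          by (rule card_image) (use injR in \<open>auto simp: inj_on_def\<close>)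
        moreover have "Inl a \<notin> (Inr ` E2 :: (nat + nat set) set)" by blast
        ultimately show ?thesis using fE by simp
      qed
      ultimately show ?thesis unfolding E2_def by simp
    next
      case False
      have "induced_bipartite (Kn_adj n) (insert (Inl 0) S)"
        by (rule constr[of _ 0 0]) (use False in auto)
      moreover have "Inl 0 \<in> Kn_verts n" using n unfolding Kn_verts_def by auto
      ultimately show ?thesis using add False by blast
    qed
  qed
qed

theorem mainTheorem13:
  fixes n :: nat
  assumes "n \<ge> 2"
  shows "well_bicovered (Kn_verts n) (Kn_adj n)"
  unfolding well_bicovered_def using maxcard[OF assms] by simp

end
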